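(* Let $S$ be an additively reduced and additively Furstenberg semidomain and let $G$ be a finitely generated torsion-free abelian group (with a total order compatible with addition). The following statements are equivalent. (1) $\mathscr{A}_+(S)=S^\times$. (2) Every $f\in S[\![G]\!]$ with $|\operatorname{supp}(f)|>1$ can be expressed as the sum of at most three irreducible elements of $S[\![G]\!]$. (3) There exists $n\in\mathbb{N}$ with $n>2$ such that every $f\in S[\![G]\!]$ with $|\operatorname{supp}(f)|>1$ can be expressed as the sum of at most $n$ irreducible elements of $S[\![G]\!]$.
   Context: A semidomain is a subsemiring (containing $0$ and $1$) of an integral domain; all semirings are commutative. For a semidomain $S$, $S^\times$ denotes the group of units of the multiplicative monoid $S\setminus\{0\}$. $S$ is additively reduced if $0$ is the only invertible element of $(S,+)$. An additive atom of $S$ is a nonzero $a\in S$ such that $a=b+c$ with $b,c\in S$ implies $b=0$ or $c=0$; $\mathscr{A}_+(S)$ is the set of additive atoms. $S$ is additively Furstenberg if every nonzero $s\in S$ can be written $s=a+t$ with $a\in\mathscr{A}_+(S)$, $t\in S$. For a torsion-free abelian group $G$ with a fixed total order compatible with addition, the group series semidomain is $S[\![G]\!]=\{\sum_{i=0}^\infty s_ix^{g_i} : s_i\in S,\ g_i\in G,\ g_i<g_{i+1}\text{ for all } i\}$, with addition and multiplication defined as for polynomials; elements are written with the convention that $s_i=0$ implies $s_{i+1}=0$. The support of $f=\sum s_ix^{g_i}$ is $\operatorname{supp}(f)=\{g_i : s_i\neq0\}$. An element $f$ is irreducible if it is nonzero, not a unit of $S[\![G]\!]$, and $f=pq$ implies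 one of $p,q$ is a unit. *)

theory Defs
  imports Main
begin

text \<open>A semidomain is a subsemiring (containing 0 and 1) of an integral domain;
  we model it as a subset S of a type of class idom.\<close>
definition semidomain :: "'a::idom set \<Rightarrow> bool" where
  "semidomain S \<longleftrightarrow> 0 \<in> S \<and> 1 \<in> S \<and>
     (\<forall>a\<in>S. \<forall>b\<in>S. a + b \<in> S) \<and> (\<forall>a\<in>S. \<forall>b\<in>S. a * b \<in> S)"

definition sd_units :: "'a::idom set \<Rightarrow> 'a set" where
  "sd_units S = {u \<in> S - {0}. \<exists>v\<in>S - {0}. u * v = 1}"

definition additively_reduced :: "'a::idom set \<Rightarrow> bool" where
  "additively_reduced S \<longleftrightarrow> (\<forall>a\<in>S. (\<exists>b\<in>S. a + b = 0) \<longrightarrow> a = 0)"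

definition additive_atoms :: "'a::idom set \<Rightarrow> 'a set" where
  "additive_atoms S = {a \<in> S. a \<noteq> 0 \<and> (\<forall>b\<in>S. \<forall>c\<in>S. a = b + c \<longrightarrow> b = 0 \<or> c = 0)}"

definition additively_Furstenberg :: "'a::idom set \<Rightarrow> bool" where
  "additively_Furstenberg S \<longleftrightarrow>
     (\<forall>s\<in>S. s \<noteq> 0 \<longrightarrow> (\<exists>a\<in>additive_atoms S. \<exists>t\<in>S. s = a + t))"

inductive_set gen_subgroup :: "'g::ab_group_add set \<Rightarrow> 'g set" for B where
  gen_zero: "0 \<in> gen_subgroup B"
| gen_base: "b \<in> B \<Longrightarrow> b \<in> gen_subgroup B"
| gen_add: "x \<in> gen_subgroup B \<Longrightarrow> y \<in> gen_subgroup B \<Longrightarrow> x + y \<in> gen_subgroup B"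
| gen_neg: "x \<in> gen_subgroup B \<Longrightarrow> - x \<in> gen_subgroup B"

definition finitely_generated_group :: "'g::ab_group_add itself \<Rightarrow> bool" where
  "finitely_generated_group _ \<longleftrightarrow> (\<exists>B::'g set. finite B \<and> gen_subgroup B = UNIV)"

text \<open>An element \<open>\<Sum> s_i x^{g_i}\<close> is represented by its coefficient function
  \<open>G \<Rightarrow> S\<close>; its support must be listable as a strictly increasing
  sequence \<open>g_0 < g_1 < \<dots>\<close> (finite or indexed by \<open>\<nat>\<close>).\<close>
definition gsupp :: "('g \<Rightarrow> 'a::zero) \<Rightarrow> 'g set" where
  "gsupp f = {g. f g \<noteq> 0}"

definition gseries :: "'a::idom set \<Rightarrow> ('g::linordered_ab_group_add \<Rightarrow> 'a) set" where
  "gseries S = {f. (\<forall>g. f g \<in> S) \<and>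
      (finite (gsupp f) \<or> (\<exists>e::nat \<Rightarrow> 'g. strict_mono e \<and> gsupp f \<subseteq> range e))}"

definition gs_add :: "('g \<Rightarrow> 'a::idom) \<Rightarrow> ('g \<Rightarrow> 'a) \<Rightarrow> 'g \<Rightarrow> 'a" where
  "gs_add f h = (\<lambda>g. f g + h g)"

text \<open>Multiplication as for polynomials (Cauchy product); the sum is finite
  for elements of \<open>gseries S\<close>.\<close>
definition gs_mult :: "('g::linordered_ab_group_add \<Rightarrow> 'a::idom) \<Rightarrow> ('g \<Rightarrow> 'a) \<Rightarrow> 'g \<Rightarrow> 'a" where
  "gs_mult f h = (\<lambda>g. \<Sum>a\<in>{a. f a \<noteq> 0 \<and> h (g - a) \<noteq> 0}. f a * h (g - a))"

definition gs_one :: "'g::linordered_ab_group_add \<Rightarrow> 'a::idom" where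
  "gs_one = (\<lambda>g. if g = 0 then 1 else 0)"

definition gs_zero :: "'g \<Rightarrow> 'a::idom" where
  "gs_zero = (\<lambda>g. 0)"

definition gs_unit :: "'a::idom set \<Rightarrow> ('g::linordered_ab_group_add \<Rightarrow> 'a) \<Rightarrow> bool" where
  "gs_unit S u \<longleftrightarrow> u \<in> gseries S \<and> (\<exists>v\<in>gseries S. gs_mult u v = gs_one)"

definition gs_irreducible :: "'a::idom set \<Rightarrow> ('g::linordered_ab_group_add \<Rightarrow> 'a) \<Rightarrow> bool" where
  "gs_irreducible S f \<longleftrightarrow> f \<in> gseries S \<and> f \<noteq> gs_zero \<and> \<not> gs_unit S f \<and>
     (\<forall>p\<in>gseries S. \<forall>q\<in>gseries S. f = gs_mult p q \<longrightarrow> gs_unit S p \<or> gs_unit S q)"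

definition sum_of_at_most_irreds ::
    "'a::idom set \<Rightarrow> nat \<Rightarrow> ('g::linordered_ab_group_add \<Rightarrow> 'a) \<Rightarrow> bool" where
  "sum_of_at_most_irreds S n f \<longleftrightarrow>
     (\<exists>k fs. k \<le> n \<and> (\<forall>i<k. gs_irreducible S (fs i)) \<and> f = (\<lambda>g. \<Sum>i<k. fs i g))"

definition supp_gt1 :: "('g \<Rightarrow> 'a::zero) \<Rightarrow> bool" where
  "supp_gt1 f \<longleftrightarrow> (\<exists>a b. a \<noteq> b \<and> a \<in> gsupp f \<and> b \<in> gsupp f)"

end

theory Submission
  imports Defs
begin

locale sdr =
  fixes S :: "'a::idom set"
  assumes sd: "semidomain S" and red: "additively_reduced S"
begin

lemma zero_S: "0 \<in> S" and one_S: "1 \<in> S"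
  and add_S: "a \<in> S \<Longrightarrow> b \<in> S \<Longrightarrow> a + b \<in> S"
  and mult_S: "a \<in> S \<Longrightarrow> b \<in> S \<Longrightarrow> a * b \<in> S"
  using sd unfolding semidomain_def by auto

lemma sum_S: "(\<And>i. i \<in> I \<Longrightarrow> f i \<in> S) \<Longrightarrow> sum f I \<in> S"
proof (induction I rule: infinite_finite_induct)
  case (infinite A) then show ?case by (simp add: zero_S)
next
  case empty then show ?case by (simp add: zero_S)
next
  case (insert x F) then show ?case by (simp add: add_S)
qed

lemma red_add: "a \<in> S \<Longrightarrow> b \<in> S \<Longrightarrow> a + b = 0 \<Longrightarrow> a = 0"
  using red unfolding additively_reduced_def by blast

lemma sum_nz:
  assumes "finite I" "\<And>i. i \<in> I \<Longrightarrow> f i \<in> S" "i0 \<in> I" "f i0 \<noteq> 0"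
  shows "sum f I \<noteq> 0"
proof
  assume "sum f I = 0"
  moreover have "sum f I = f i0 + sum f (I - {i0})"
    using assms by (simp add: sum.remove)
  moreover have "sum f (I - {i0}) \<in> S" using assms by (intro sum_S) auto
  ultimately have "f i0 = 0" using red_add[of "f i0"] assms by auto
  with assms show False by simp
qed

lemma sum_atom_unique:
  assumes "finite I" "\<And>i. i \<in> I \<Longrightarrow> f i \<in> S" "sum f I \<in> additive_atoms S"
    "i \<in> I" "j \<in> I" "f i \<noteq> 0" "f j \<noteq> 0"
  shows "i = j"
proof (rule ccontr)
  assume ij: "i \<noteq> j"
  have e: "sum f I = f i + sum f (I - {i})"
    using assms by (simp add: sum.remove)
  have r: "sum f (I - {i}) \<in> S" using assms by (intro sum_S) auto
  have "sum f (I - {i}) \<noteq> 0"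
    using assms ij by (intro sum_nz[of _ _ j]) auto
  moreover have "f i \<in> S" using assms by auto
  ultimately show False using assms(3,6) e r unfolding additive_atoms_def by blast
qed

lemma sum_zero_all:
  assumes "finite I" "\<And>i. i \<in> I \<Longrightarrow> f i \<in> S" "sum f I = 0" "i \<in> I"
  shows "f i = 0"
  using sum_nz[of I f i] assms by blast

lemma unit_factor:
  assumes "s \<in> S" "r \<in> S" "s * r \<in> sd_units S"
  shows "s \<in> sd_units S"
proof -
  obtain w where w: "w \<in> S" "w \<noteq> 0" "s * r * w = 1" using assms(3) unfolding sd_units_def by auto
  have "s \<noteq> 0" using w by auto
  moreover have "r * w \<in> S" using assms w by (simp add: mult_S)
  moreover have "r * w \<noteq> 0" using w by auto
  moreover have "s * (r * w) = 1" using w by (simp add: mult.assoc)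
  ultimately show ?thesis using assms unfolding sd_units_def by blast
qed

lemma gsS: "f \<in> gseries S \<Longrightarrow> f g \<in> S"
  unfolding gseries_def by auto

lemma gs_wo:
  fixes f :: "'g::linordered_ab_group_add \<Rightarrow> 'a"
  assumes "f \<in> gseries S" "A \<subseteq> gsupp f" "A \<noteq> {}"
  shows "\<exists>m\<in>A. \<forall>x\<in>A. m \<le> x"
proof (cases "finite (gsupp f)")
  case True
  then have "finite A" using assms finite_subset by blast
  then show ?thesis using assms by (intro bexI[of _ "Min A"]) auto
next
  case False
  then obtain e :: "nat \<Rightarrow> 'g" where e: "strict_mono e" "gsupp f \<subseteq> range e"
    using assms unfolding gseries_def by auto
  obtain x where x: "x \<in> A" using assms by auto
  then obtain n where "e n \<in> A" using e assms by blast
  define n0 where "n0 = (LEAST n. e n \<in> A)"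
  have n0: "e n0 \<in> A" unfolding n0_def by (rule LeastI) fact
  have "\<forall>y\<in>A. e n0 \<le> y"
  proof
    fix y assume "y \<in> A"
    then obtain m where m: "y = e m" using e assms by blast
    then have "n0 \<le> m" unfolding n0_def using \<open>y \<in> A\<close> by (intro Least_le) simp
    then show "e n0 \<le> y" using m e(1) by (simp add: strict_mono_less_eq)
  qed
  then show ?thesis using n0 by blast
qed

end

context sdr begin

lemma gs_conv_finite:
  fixes p q :: "'g::linordered_ab_group_add \<Rightarrow> 'a"
  assumes p: "p \<in> gseries S" and q: "q \<in> gseries S"
  shows "finite {a. p a \<noteq> 0 \<and> q (g - a) \<noteq> 0}" (is "finite ?I")
proof -
  have I1: "?I \<subseteq> gsupp p" unfolding gsupp_def by auto
  have I2: "(\<lambda>a. g - a) ` ?I \<subseteq> gsupp q" unfolding gsupp_def by auto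
  have inj: "inj_on (\<lambda>a. g - a) ?I" by (auto simp: inj_on_def)
  show ?thesis
  proof (cases "finite (gsupp p)")
    case True then show ?thesis using I1 finite_subset by blast
  next
    case Fp: False
    show ?thesis
    proof (cases "finite (gsupp q)")
      case True
      then have "finite ((\<lambda>a. g - a) ` ?I)" using I2 finite_subset by blast
      then show ?thesis using inj finite_imageD by blast
    next
      case Fq: False
      obtain e :: "nat \<Rightarrow> 'g" where e: "strict_mono e" "gsupp p \<subseteq> range e"
        using p Fp unfolding gseries_def by auto
      obtain e' :: "nat \<Rightarrow> 'g" where e': "strict_mono e'" "gsupp q \<subseteq> range e'"
        using q Fq unfolding gseries_def by auto
      show ?thesis
      proof (rule ccontr)
        assume inf: "infinite ?I"
        define N where "N = {n. e n \<in> ?I}"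
        have "?I \<subseteq> e ` N" using I1 e unfolding N_def by auto
        then have infN: "infinite N" using inf finite_subset by blast
        then obtain n0 where n0: "n0 \<in> N" by (metis finite.emptyI ex_in_conv)
        define phi where "phi n = inv e' (g - e n)" for n
        have phiE: "e' (phi n) = g - e n" if "n \<in> N" for n
        proof -
          have "g - e n \<in> range e'" using that I2 e' unfolding N_def by auto
          then show ?thesis unfolding phi_def by (simp add: f_inv_into_f)
        qed
        define M where "M = N \<inter> {n0<..}"
        have "inj_on phi M"
        proof (rule inj_onI)
          fix x y assume "x \<in> M" "y \<in> M" "phi x = phi y"
          then have "g - e x = g - e y" using phiE unfolding M_def by (metis IntD1)
          then have "e x = e y" by simp
          then show "x = y" using e(1) strict_mono_eq by blast
        qed
        moreover have "phi ` M \<subseteq> {..<phi n0}"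
        proof
          fix m assume "m \<in> phi ` M"
          then obtain n where n: "n \<in> M" "m = phi n" by auto
          then have "e n0 < e n" using e(1) unfolding M_def by (simp add: strict_mono_less)
          then have "g - e n < g - e n0" by simp
          then have "e' (phi n) < e' (phi n0)" using phiE n n0 unfolding M_def by auto
          then show "m \<in> {..<phi n0}" using e'(1) n by (simp add: strict_mono_less)
        qed
        ultimately have "finite M" by (rule inj_on_finite) simp
        moreover have "N \<subseteq> M \<union> {..n0}" unfolding M_def by auto
        ultimately have "finite N" using finite_subset by blast
        then show False using infN by simp
      qed
    qed
  qed
qed

lemma gs_mult_nz:
  assumes p: "p \<in> gseries S" and q: "q \<in> gseries S" and "p a \<noteq> 0" "q b \<noteq> 0"
  shows "gs_mult p q (a + b) \<noteq> 0"
  unfolding gs_mult_def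
proof (rule sum_nz[of _ _ a])
  show "finite {x. p x \<noteq> 0 \<and> q (a + b - x) \<noteq> 0}" by (rule gs_conv_finite[OF p q])
  show "\<And>i. i \<in> {x. p x \<noteq> 0 \<and> q (a + b - x) \<noteq> 0} \<Longrightarrow> p i * q (a + b - i) \<in> S"
    using p q by (simp add: gsS mult_S)
  show "a \<in> {x. p x \<noteq> 0 \<and> q (a + b - x) \<noteq> 0}" using assms by simp
  show "p a * q (a + b - a) \<noteq> 0" using assms by simp
qed

lemma gs_mult_supp:
  assumes "gs_mult p q g \<noteq> 0"
  shows "\<exists>a b. p a \<noteq> 0 \<and> q b \<noteq> 0 \<and> g = a + b"
proof (rule ccontr)
  assume no: "\<not> ?thesis"
  have E: "{a. p a \<noteq> 0 \<and> q (g - a) \<noteq> 0} = {}"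
  proof (rule equals0I)
    fix a assume "a \<in> {a. p a \<noteq> 0 \<and> q (g - a) \<noteq> 0}"
    then have "p a \<noteq> 0" "q (g - a) \<noteq> 0" "g = a + (g - a)" by auto
    then show False using no by blast
  qed
  then show False using assms unfolding gs_mult_def E by simp
qed

lemma gs_mult_mono_left:
  assumes "\<And>x. x \<noteq> a0 \<Longrightarrow> p x = 0"
  shows "gs_mult p q g = p a0 * q (g - a0)"
proof (cases "p a0 \<noteq> 0 \<and> q (g - a0) \<noteq> 0")
  case True
  have E1: "{a. p a \<noteq> 0 \<and> q (g - a) \<noteq> 0} = {a0}"
  proof (rule set_eqI)
    fix a show "a \<in> {a. p a \<noteq> 0 \<and> q (g - a) \<noteq> 0} \<longleftrightarrow> a \<in> {a0}"
      using True assms[of a] by auto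
  qed
  then show ?thesis unfolding gs_mult_def E1 by simp
next
  case False
  have E: "{a. p a \<noteq> 0 \<and> q (g - a) \<noteq> 0} = {}"
  proof (rule equals0I)
    fix a assume "a \<in> {a. p a \<noteq> 0 \<and> q (g - a) \<noteq> 0}"
    then have a: "p a \<noteq> 0" "q (g - a) \<noteq> 0" by auto
    then have "a = a0" using assms by blast
    then show False using False a by simp
  qed
  then have "gs_mult p q g = 0" unfolding gs_mult_def E by simp
  then show ?thesis using False by simp
qed

lemma gs_mult_mono_right:
  assumes "\<And>x. x \<noteq> b0 \<Longrightarrow> q x = 0"
  shows "gs_mult p q g = p (g - b0) * q b0"
proof (cases "p (g - b0) \<noteq> 0 \<and> q b0 \<noteq> 0")
  case True
  have E1: "{a. p a \<noteq> 0 \<and> q (g - a) \<noteq> 0} = {g - b0}"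
  proof safe
    fix a assume "p a \<noteq> 0" "q (g - a) \<noteq> 0"
    then have "g - a = b0" using assms by blast
    then show "a = g - b0" by (simp add: algebra_simps)
  qed (use True in auto)
  then show ?thesis unfolding gs_mult_def E1 by simp
next
  case False
  have E: "{a. p a \<noteq> 0 \<and> q (g - a) \<noteq> 0} = {}"
  proof (rule equals0I)
    fix a assume "a \<in> {a. p a \<noteq> 0 \<and> q (g - a) \<noteq> 0}"
    then have a: "p a \<noteq> 0" "q (g - a) \<noteq> 0" by auto
    then have "g - a = b0" using assms by blast
    then have "a = g - b0" by (simp add: algebra_simps)
    then show False using False a \<open>g - a = b0\<close> by auto
  qed
  then have "gs_mult p q g = 0" unfolding gs_mult_def E by simp
  then show ?thesis using False by simp
qed

lemma gseries_finite:
  fixes h :: "'g::linordered_ab_group_add \<Rightarrow> 'a"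
  shows "(\<And>x. h x \<in> S) \<Longrightarrow> finite (gsupp h) \<Longrightarrow> h \<in> gseries S"
  unfolding gseries_def by auto

lemma gseries_sub:
  fixes h :: "'g::linordered_ab_group_add \<Rightarrow> 'a"
  assumes "f \<in> gseries S" "\<And>x. h x \<in> S" "\<And>x. h x \<noteq> 0 \<Longrightarrow> f x \<noteq> 0"
  shows "h \<in> gseries S"
proof -
  have sub: "gsupp h \<subseteq> gsupp f" using assms unfolding gsupp_def by auto
  show ?thesis using assms(1) unfolding gseries_def
    using assms(2) sub finite_subset by blast
qed

lemma mono_unit:
  fixes b :: "'g::linordered_ab_group_add"
  assumes "s \<in> sd_units S"
  shows "gs_unit S (\<lambda>x. if x = b then s else 0)"
proof -
  obtain s' where s': "s' \<in> S" "s' \<noteq> 0" "s * s' = 1" "s \<in> S" using assms unfolding sd_units_def by auto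
  let ?u = "\<lambda>x. if x = b then s else 0" and ?v = "\<lambda>x::'g. if x = - b then s' else 0"
  have u: "?u \<in> gseries S"
    by (rule gseries_finite) (auto simp: zero_S s' gsupp_def intro: finite_subset[of _ "{b}"])
  have v: "?v \<in> gseries S"
    by (rule gseries_finite) (auto simp: zero_S s' gsupp_def intro: finite_subset[of _ "{-b}"])
  have "gs_mult ?u ?v = gs_one"
  proof
    fix g
    have "gs_mult ?u ?v g = ?u b * ?v (g - b)" by (rule gs_mult_mono_left) simp
    also have "\<dots> = gs_one g" unfolding gs_one_def using s' by simp
    finally show "gs_mult ?u ?v g = gs_one g" .
  qed
  then show ?thesis unfolding gs_unit_def using u v by blast
qed

lemma not_unit_two:
  fixes h :: "'g::linordered_ab_group_add \<Rightarrow> 'a"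
  assumes h: "h \<in> gseries S" and "h x \<noteq> 0" "h y \<noteq> 0" "x \<noteq> y"
  shows "\<not> gs_unit S h"
proof
  assume "gs_unit S h"
  then obtain v where v: "v \<in> gseries S" "gs_mult h v = gs_one" unfolding gs_unit_def by auto
  have "\<exists>b. v b \<noteq> 0"
  proof (rule ccontr)
    assume "\<not> ?thesis"
    then have "gs_mult h v 0 = 0" unfolding gs_mult_def by simp
    then show False using v unfolding gs_one_def by (metis one_neq_zero)
  qed
  then obtain b where b: "v b \<noteq> 0" by auto
  have "gs_mult h v (x + b) \<noteq> 0" "gs_mult h v (y + b) \<noteq> 0"
    using gs_mult_nz[OF h v(1)] assms b by auto
  then have "x + b = 0" "y + b = 0" using v unfolding gs_one_def by (auto split: if_splits)
  then show False using assms by (metis add_right_cancel)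
qed

end

context sdr begin

lemma crit:
  fixes h :: "'g::linordered_ab_group_add \<Rightarrow> 'a"
  assumes hS: "h \<in> gseries S" and d: "0 < d"
    and m0: "h m0 \<noteq> 0" and m1: "h (m0 + d) \<noteq> 0"
    and lo: "\<And>x. h x \<noteq> 0 \<Longrightarrow> m0 \<le> x"
    and gap: "\<And>x. h x \<noteq> 0 \<Longrightarrow> x \<noteq> m0 \<Longrightarrow> m0 + d \<le> x"
    and unit: "h c \<in> sd_units S"
    and free: "\<And>x. h x \<noteq> 0 \<Longrightarrow> m0 < x \<Longrightarrow> h (x + d) \<noteq> 0 \<Longrightarrow>
                  x = m0 + d \<and> h (m0 + d) \<in> additive_atoms S"
  shows "gs_irreducible S h"
  unfolding gs_irreducible_def
proof (intro conjI ballI impI)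
  show "h \<in> gseries S" by fact
  show "h \<noteq> gs_zero" using m0 unfolding gs_zero_def by auto
  have "m0 \<noteq> m0 + d" using d by simp
  then show "\<not> gs_unit S h" using not_unit_two[OF hS m0 m1] by simp
next
  fix p q assume p: "p \<in> gseries S" and q: "q \<in> gseries S" and hpq: "h = gs_mult p q"
  have hnz: "\<And>a b. p a \<noteq> 0 \<Longrightarrow> q b \<noteq> 0 \<Longrightarrow> h (a + b) \<noteq> 0"
    using gs_mult_nz[OF p q] hpq by simp
  have hsupp: "\<And>x. h x \<noteq> 0 \<Longrightarrow> \<exists>a b. p a \<noteq> 0 \<and> q b \<noteq> 0 \<and> x = a + b"
    using gs_mult_supp hpq by metis
  obtain a b where ab: "p a \<noteq> 0" "q b \<noteq> 0" using hsupp[OF m0] by blast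
  obtain a0 where a0: "p a0 \<noteq> 0" "\<And>x. p x \<noteq> 0 \<Longrightarrow> a0 \<le> x"
    using gs_wo[OF p, of "gsupp p"] ab unfolding gsupp_def by auto
  obtain b0 where b0: "q b0 \<noteq> 0" "\<And>x. q x \<noteq> 0 \<Longrightarrow> b0 \<le> x"
    using gs_wo[OF q, of "gsupp q"] ab unfolding gsupp_def by auto
  have hc: "h c \<noteq> 0" using unit unfolding sd_units_def by auto
  show "gs_unit S p \<or> gs_unit S q"
  proof (cases "\<forall>x. p x \<noteq> 0 \<longrightarrow> x = a0")
    case True
    then have pm: "\<And>x. x \<noteq> a0 \<Longrightarrow> p x = 0" by blast
    have "h c = p a0 * q (c - a0)" using hpq gs_mult_mono_left[OF pm] by simp
    then have "p a0 \<in> sd_units S" using unit_factor[of "p a0" "q (c - a0)"] unit p q gsS by metis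
    then have "gs_unit S (\<lambda>x. if x = a0 then p a0 else 0)" by (rule mono_unit)
    moreover have "(\<lambda>x. if x = a0 then p a0 else 0) = p" using pm by auto
    ultimately show ?thesis by simp
  next
    case Fp: False
    show ?thesis
    proof (cases "\<forall>x. q x \<noteq> 0 \<longrightarrow> x = b0")
      case True
      then have qm: "\<And>x. x \<noteq> b0 \<Longrightarrow> q x = 0" by blast
      have "h c = q b0 * p (c - b0)" using hpq gs_mult_mono_right[OF qm] by (simp add: mult.commute)
      then have "q b0 \<in> sd_units S" using unit_factor[of "q b0" "p (c - b0)"] unit p q gsS by metis
      then have "gs_unit S (\<lambda>x. if x = b0 then q b0 else 0)" by (rule mono_unit)
      moreover have "(\<lambda>x. if x = b0 then q b0 else 0) = q" using qm by auto
      ultimately show ?thesis by simp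
    next
      case Fq: False
      obtain a1 where a1: "p a1 \<noteq> 0" "a1 \<noteq> a0" "\<And>x. p x \<noteq> 0 \<Longrightarrow> x \<noteq> a0 \<Longrightarrow> a1 \<le> x"
        using gs_wo[OF p, of "{x. p x \<noteq> 0 \<and> x \<noteq> a0}"] Fp unfolding gsupp_def by auto
      obtain b1 where b1: "q b1 \<noteq> 0" "b1 \<noteq> b0" "\<And>x. q x \<noteq> 0 \<Longrightarrow> x \<noteq> b0 \<Longrightarrow> b1 \<le> x"
        using gs_wo[OF q, of "{x. q x \<noteq> 0 \<and> x \<noteq> b0}"] Fq unfolding gsupp_def by auto
      have a01: "a0 < a1" using a0(2)[OF a1(1)] a1(2) by simp
      have b01: "b0 < b1" using b0(2)[OF b1(1)] b1(2) by simp
      have m0eq: "m0 = a0 + b0"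
      proof (rule antisym)
        show "m0 \<le> a0 + b0" using lo hnz a0 b0 by blast
        obtain a b where "p a \<noteq> 0" "q b \<noteq> 0" "m0 = a + b" using hsupp[OF m0] by blast
        then show "a0 + b0 \<le> m0" using a0 b0 by (simp add: add_mono)
      qed
      have lowb: "min (a1 + b0) (a0 + b1) \<le> x" if hx0: "h x \<noteq> 0" and xn: "x \<noteq> m0" for x
      proof -
        obtain a b where ab: "p a \<noteq> 0" "q b \<noteq> 0" "x = a + b" using hsupp[OF hx0] by blast
        show ?thesis
        proof (cases "a = a0")
          case True
          then have "b \<noteq> b0" using xn m0eq ab by auto
          then have "b1 \<le> b" using b1 ab by simp
          then have "a0 + b1 \<le> x" using ab True by (simp add: add_left_mono)
          then show ?thesis by (simp add: min.coboundedI2)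
        next
          case False
          then have "a1 \<le> a" using a1 ab by simp
          then have "a1 + b0 \<le> x" using ab b0 by (simp add: add_mono)
          then show ?thesis by (simp add: min.coboundedI1)
        qed
      qed
      have key: False if eq: "a0 + b1 = a1 + b0" and md: "m0 + d = a1 + b0"
        and at: "h (m0 + d) \<in> additive_atoms S"
      proof -
        let ?I = "{x. p x \<noteq> 0 \<and> q (m0 + d - x) \<noteq> 0}"
        have "h (m0 + d) = (\<Sum>x\<in>?I. p x * q (m0 + d - x))" using hpq unfolding gs_mult_def by simp
        moreover have "finite ?I" by (rule gs_conv_finite[OF p q])
        moreover have "m0 + d - a0 = b1" using md eq by (simp add: algebra_simps)
        moreover have "m0 + d - a1 = b0" using md by (simp add: algebra_simps)
        ultimately have "a0 = a1"
          using sum_atom_unique[of ?I "\<lambda>x. p x * q (m0 + d - x)" a0 a1] at a0 a1 b0 b1 p q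
          by (simp add: gsS mult_S)
        then show False using a01 by simp
      qed
      show ?thesis
      proof (cases "a1 + b0 \<le> a0 + b1")
        case True
        have h1: "h (a1 + b0) \<noteq> 0" using hnz a1 b0 by blast
        have "a1 + b0 \<noteq> m0" using m0eq a01 by simp
        then have le1: "m0 + d \<le> a1 + b0" using gap h1 by blast
        have "m0 + d \<noteq> m0" using d by simp
        then have "min (a1 + b0) (a0 + b1) \<le> m0 + d" using lowb m1 by blast
        then have md: "m0 + d = a1 + b0" using le1 True by (simp add: min_def split: if_splits)
        have hx: "h (a0 + b1) \<noteq> 0" using hnz a0 b1 by blast
        have lt: "m0 < a0 + b1" using m0eq b01 by simp
        have "a0 + b1 + d = a1 + b1" using md m0eq by (simp add: algebra_simps)
        then have "h (a0 + b1 + d) \<noteq> 0" using hnz[OF a1(1) b1(1)] by metis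
        then have "a0 + b1 = m0 + d \<and> h (m0 + d) \<in> additive_atoms S" using free hx lt by blast
        then show ?thesis using key md by simp
      next
        case False
        then have F: "a0 + b1 < a1 + b0" by simp
        have h1: "h (a0 + b1) \<noteq> 0" using hnz a0 b1 by blast
        have "a0 + b1 \<noteq> m0" using m0eq b01 by simp
        then have le1: "m0 + d \<le> a0 + b1" using gap h1 by blast
        have "m0 + d \<noteq> m0" using d by simp
        then have "min (a1 + b0) (a0 + b1) \<le> m0 + d" using lowb m1 by blast
        then have md: "m0 + d = a0 + b1" using le1 F by (simp add: min_def split: if_splits)
        have hx: "h (a1 + b0) \<noteq> 0" using hnz a1 b0 by blast
        have lt: "m0 < a1 + b0" using m0eq a01 by simp
        have "a1 + b0 + d = a1 + b1" using md m0eq by (simp add: algebra_simps)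
        then have "h (a1 + b0 + d) \<noteq> 0" using hnz[OF a1(1) b1(1)] by metis
        then have "a1 + b0 = m0 + d \<and> h (m0 + d) \<in> additive_atoms S" using free hx lt by blast
        then show ?thesis using key md by simp
      qed
    qed
  qed
qed

end

definition bk :: "'g::linordered_ab_group_add \<Rightarrow> nat \<Rightarrow> 'g \<Rightarrow> 'g" where
  "bk d j q = ((\<lambda>x. x - d) ^^ j) q"

definition dep :: "'g::linordered_ab_group_add set \<Rightarrow> 'g \<Rightarrow> 'g \<Rightarrow> nat" where
  "dep T d q = (LEAST j. bk d (Suc j) q \<notin> T)"

definition wo :: "'g::linordered_ab_group_add set \<Rightarrow> bool" where
  "wo T \<longleftrightarrow> (\<forall>A. A \<subseteq> T \<longrightarrow> A \<noteq> {} \<longrightarrow> (\<exists>m\<in>A. \<forall>x\<in>A. m \<le> x))"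

lemma bk_Suc: "bk d (Suc j) q = bk d j q - d"
  unfolding bk_def by simp

lemma bk_Suc_plus: "bk d (Suc j) (q + d) = bk d j q"
  unfolding bk_def funpow_Suc_right by simp

lemma dep_ex:
  assumes "wo T" "0 < d"
  shows "\<exists>j. bk d (Suc j) q \<notin> T"
proof (rule ccontr)
  assume "\<not> ?thesis"
  then have all: "\<And>j. bk d (Suc j) q \<in> T" by blast
  let ?A = "range (\<lambda>j. bk d (Suc j) q)"
  have "?A \<subseteq> T" "?A \<noteq> {}" using all by auto
  then obtain m where m: "m \<in> ?A" "\<forall>x\<in>?A. m \<le> x" using assms(1) unfolding wo_def by metis
  then obtain j where j: "m = bk d (Suc j) q" by auto
  have "bk d (Suc (Suc j)) q \<in> ?A" by blast
  then have "m \<le> bk d (Suc j) q - d" using m(2) bk_Suc[of d "Suc j" q] by metis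
  then show False using j assms(2) by simp
qed

lemma dep_step:
  assumes "wo T" "0 < d" "q \<in> T"
  shows "dep T d (q + d) = Suc (dep T d q)"
proof -
  have "dep T d (q + d) = (LEAST j. bk d j q \<notin> T)"
    unfolding dep_def bk_Suc_plus by simp
  also have "\<dots> = Suc (LEAST j. bk d (Suc j) q \<notin> T)"
  proof -
    obtain n where "bk d (Suc n) q \<notin> T" using dep_ex[OF assms(1,2)] by blast
    moreover have "\<not> (bk d 0 q \<notin> T)" using assms(3) unfolding bk_def by simp
    ultimately show ?thesis by (rule Least_Suc)
  qed
  finally show ?thesis unfolding dep_def .
qed

lemma dep_pred:
  assumes "dep T d q \<noteq> 0"
  shows "q - d \<in> T"
proof (rule ccontr)
  assume "q - d \<notin> T"
  then have "bk d (Suc 0) q \<notin> T" unfolding bk_def by simp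
  then have "dep T d q \<le> 0" unfolding dep_def by (rule Least_le)
  then show False using assms by simp
qed

lemma dep_zero:
  assumes "q - d \<notin> T"
  shows "dep T d q = 0"
proof -
  have "bk d (Suc 0) q \<notin> T" using assms unfolding bk_def by simp
  then have "dep T d q \<le> 0" unfolding dep_def by (rule Least_le)
  then show ?thesis by simp
qed

lemma par_flip:
  assumes "wo T" "0 < d" "x \<in> T"
  shows "even (dep T d (x + d)) \<longleftrightarrow> \<not> even (dep T d x)"
  using dep_step[OF assms] by simp

lemma odd_pred:
  assumes "wo T" "0 < d" "x \<in> T" "odd (dep T d x)"
  shows "x - d \<in> T \<and> even (dep T d (x - d))"
proof -
  have "dep T d x \<noteq> 0" using assms(4) by (metis even_zero)
  then have xd: "x - d \<in> T" by (rule dep_pred)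
  have "dep T d (x - d + d) = Suc (dep T d (x - d))" by (rule dep_step[OF assms(1,2) xd])
  then show ?thesis using xd assms(4) by simp
qed

context sdr begin

lemma wo_sub: "f \<in> gseries S \<Longrightarrow> T \<subseteq> gsupp f \<Longrightarrow> wo T"
  unfolding wo_def using gs_wo by (metis subset_trans)

lemma Epiece:
  fixes h :: "'g::linordered_ab_group_add \<Rightarrow> 'a"
  assumes woT: "wo T" and d: "0 < d" and g0T: "g0 \<notin> T" and Tab: "\<And>x. x \<in> T \<Longrightarrow> g0 + d \<le> x"
    and hS: "h \<in> gseries S" and h0: "h g0 \<noteq> 0" and h1: "h (g0 + d) \<noteq> 0"
    and unit: "h c \<in> sd_units S"
    and sup: "\<And>x. h x \<noteq> 0 \<Longrightarrow> x = g0 \<or> x = g0 + d \<or> (x \<in> T \<and> even (dep T d x) = b)"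
    and cond: "h (g0 + d) \<in> additive_atoms S \<or> (g0 + d \<in> T \<longleftrightarrow> b)"
  shows "gs_irreducible S h"
proof (rule crit[OF hS d h0 h1 _ _ unit])
  have g01: "g0 < g0 + d" using d by simp
  show "g0 \<le> x" if "h x \<noteq> 0" for x
    using sup[OF that] Tab g01 by (metis order.strict_implies_order order_refl order_trans)
  show "g0 + d \<le> x" if "h x \<noteq> 0" "x \<noteq> g0" for x
    using sup[OF that(1)] that(2) Tab by auto
  show "x = g0 + d \<and> h (g0 + d) \<in> additive_atoms S"
    if hx: "h x \<noteq> 0" and lt: "g0 < x" and hxd: "h (x + d) \<noteq> 0" for x
  proof -
    have "x < x + d" using d by simp
    then have xd1: "x + d \<noteq> g0" "x + d \<noteq> g0 + d" using lt by auto
    then have xdT: "x + d \<in> T" "even (dep T d (x + d)) = b" using sup[OF hxd] by auto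
    have "x \<noteq> g0" using lt by simp
    then consider "x = g0 + d" | "x \<in> T" "even (dep T d x) = b" using sup[OF hx] by auto
    then show ?thesis
    proof cases
      case 1
      show ?thesis
      proof (rule ccontr)
        assume "\<not> ?thesis"
        then have na: "h (g0 + d) \<notin> additive_atoms S" using 1 by simp
        then have cb: "g0 + d \<in> T \<longleftrightarrow> b" using cond by simp
        show False
        proof (cases "g0 + d \<in> T")
          case True
          have "dep T d (g0 + d) = 0" using g0T by (intro dep_zero) simp
          moreover have "dep T d (x + d) = Suc (dep T d x)" using dep_step[OF woT d] True 1 by simp
          ultimately have "dep T d (x + d) = 1" using 1 by simp
          then show False using xdT cb True by simp
        next
          case False
          have "dep T d (x + d) = 0" using False 1 by (intro dep_zero) simp
          then show False using xdT cb False by simp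
        qed
      qed
    next
      case 2
      then show ?thesis using par_flip[OF woT d 2(1)] xdT by simp
    qed
  qed
qed

lemma Ypiece:
  fixes f :: "'g::linordered_ab_group_add \<Rightarrow> 'a"
  assumes f: "f \<in> gseries S" and TS: "T \<subseteq> gsupp f" and d: "0 < d"
    and o0: "o0 \<in> T" "odd (dep T d o0)"
    and o0min: "\<And>x. x \<in> T \<Longrightarrow> odd (dep T d x) \<Longrightarrow> o0 \<le> x"
    and u: "u \<in> sd_units S"
  shows "gs_irreducible S (\<lambda>x. if x = o0 - d then u else if x \<in> T \<and> odd (dep T d x) then f x else 0)"
    (is "gs_irreducible S ?Y")
proof -
  have woT: "wo T" by (rule wo_sub[OF f TS])
  let ?q = "o0 - d"
  have qT: "?q \<in> T" using odd_pred[OF woT d o0] by simp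
  have qo: "?q < o0" using d by simp
  have u0: "u \<noteq> 0" "u \<in> S" using u unfolding sd_units_def by auto
  have fT: "f x \<noteq> 0" if "x \<in> T" for x using that TS unfolding gsupp_def by auto
  have YS: "?Y \<in> gseries S"
  proof (rule gseries_sub[OF f])
    show "?Y x \<in> S" for x using u0 gsS[OF f] zero_S by auto
    show "f x \<noteq> 0" if "?Y x \<noteq> 0" for x using that fT qT by (auto split: if_splits)
  qed
  have qd: "?q + d = o0" by simp
  show ?thesis
  proof (rule crit[OF YS d, of ?q ?q])
    show "?Y ?q \<noteq> 0" using u0 by simp
    show "?Y (?q + d) \<noteq> 0" unfolding qd using qo fT o0 by auto
    show "?Y ?q \<in> sd_units S" using u by simp
    show "?q \<le> x" if "?Y x \<noteq> 0" for x
      using that o0min qo by (auto split: if_splits intro: order.trans[OF order.strict_implies_order[OF qo]])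
    show "?q + d \<le> x" if "?Y x \<noteq> 0" "x \<noteq> ?q" for x
      unfolding qd using that o0min by (auto split: if_splits)
    show "x = ?q + d \<and> ?Y (?q + d) \<in> additive_atoms S"
      if hx: "?Y x \<noteq> 0" and lt: "?q < x" and hxd: "?Y (x + d) \<noteq> 0" for x
    proof -
      have xO: "x \<in> T" "odd (dep T d x)" using hx lt by (auto split: if_splits)
      have xx: "x < x + d" using d by simp
      have "x + d \<noteq> ?q" using lt xx by (metis less_trans less_irrefl)
      then have "x + d \<in> T" "odd (dep T d (x + d))" using hxd by (auto split: if_splits)
      then show ?thesis using par_flip[OF woT d xO(1)] xO by simp
    qed
  qed
qed

end

context sdr begin

lemma sum1: "gs_irreducible S f \<Longrightarrow> sum_of_at_most_irreds S 3 f"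
  unfolding sum_of_at_most_irreds_def
  by (rule exI[of _ 1], rule exI[of _ "\<lambda>_. f"]) simp

lemma sum2:
  assumes "gs_irreducible S X" "gs_irreducible S Y" "f = (\<lambda>g. X g + Y g)"
  shows "sum_of_at_most_irreds S 3 f"
  unfolding sum_of_at_most_irreds_def
proof (rule exI[of _ "2::nat"], rule exI[of _ "\<lambda>i::nat. if i = 0 then X else Y"], intro conjI allI impI)
  show "(2::nat) \<le> 3" by simp
  show "gs_irreducible S (if i = 0 then X else Y)" if "i < 2" for i :: nat using assms by simp
  show "f = (\<lambda>g. \<Sum>i<(2::nat). (if i = 0 then X else Y) g)"
    using assms(3) by (simp add: numeral_2_eq_2)
qed

lemma ABcase:
  fixes f :: "'g::linordered_ab_group_add \<Rightarrow> 'a"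
  assumes au: "additive_atoms S = sd_units S"
    and spl: "\<And>c. c \<in> S \<Longrightarrow> c \<noteq> 0 \<Longrightarrow> \<exists>u t. u \<in> sd_units S \<and> t \<in> S \<and> c = u + t"
    and f: "f \<in> gseries S" and d: "0 < d"
    and TS: "T \<subseteq> gsupp f" and g0T: "g0 \<notin> T" and Tab: "\<And>x. x \<in> T \<Longrightarrow> g0 + d \<le> x"
    and cov: "\<And>x. f x \<noteq> 0 \<Longrightarrow> x = g0 \<or> x = g0 + d \<or> x \<in> T"
    and f0: "f g0 \<noteq> 0" and f1: "f (g0 + d) \<noteq> 0"
    and cT: "c \<notin> T" and cu: "f c \<in> sd_units S"
    and cond: "f (g0 + d) \<in> additive_atoms S \<or> g0 + d \<in> T"
    and nu: "g0 + d \<in> T \<Longrightarrow> f (g0 + d) \<notin> sd_units S"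
  shows "sum_of_at_most_irreds S 3 f"
proof -
  have woT: "wo T" by (rule wo_sub[OF f TS])
  have fT: "f x \<noteq> 0" if "x \<in> T" for x using that TS unfolding gsupp_def by auto
  have condE: "f (g0 + d) \<in> additive_atoms S \<or> (g0 + d \<in> T \<longleftrightarrow> True)" using cond by simp
  show ?thesis
  proof (cases "\<exists>x\<in>T. odd (dep T d x)")
    case False
    have "gs_irreducible S f"
    proof (rule Epiece[OF woT d g0T Tab f f0 f1 cu _ condE])
      show "x = g0 \<or> x = g0 + d \<or> x \<in> T \<and> even (dep T d x) = True" if "f x \<noteq> 0" for x
        using cov[OF that] False by auto
    qed
    then show ?thesis by (rule sum1)
  next
    case True
    obtain o0 where o0: "o0 \<in> {x\<in>T. odd (dep T d x)}" "\<forall>y\<in>{x\<in>T. odd (dep T d x)}. o0 \<le> y"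
      using gs_wo[OF f, of "{x\<in>T. odd (dep T d x)}"] True TS by blast
    have o0T: "o0 \<in> T" "odd (dep T d o0)" using o0 by auto
    have qT: "o0 - d \<in> T" "even (dep T d (o0 - d))" using odd_pred[OF woT d o0T] by auto
    obtain u t where ut: "u \<in> sd_units S" "t \<in> S" "f (o0 - d) = u + t"
      using spl[OF gsS[OF f] fT[OF qT(1)]] by blast
    define Y where "Y = (\<lambda>x. if x = o0 - d then u else if x \<in> T \<and> odd (dep T d x) then f x else 0)"
    define X where "X = (\<lambda>x. if x = o0 - d then t else if x \<in> T \<and> odd (dep T d x) then 0 else f x)"
    have Yirr: "gs_irreducible S Y" unfolding Y_def
      by (rule Ypiece[OF f TS d o0T]) (use o0 ut in auto)
    have sumXY: "f = (\<lambda>g. X g + Y g)" unfolding X_def Y_def using ut by (auto simp: fun_eq_iff)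
    have g0q: "g0 \<noteq> o0 - d" using qT g0T by auto
    have cq: "c \<noteq> o0 - d" using qT cT by auto
    have XS: "X \<in> gseries S"
    proof (rule gseries_sub[OF f])
      show "X x \<in> S" for x unfolding X_def using ut gsS[OF f] zero_S by auto
      show "f x \<noteq> 0" if "X x \<noteq> 0" for x using that fT qT unfolding X_def by (auto split: if_splits)
    qed
    have X0: "X g0 \<noteq> 0" unfolding X_def using g0q g0T f0 by auto
    have X1: "X (g0 + d) \<noteq> 0"
    proof (cases "g0 + d = o0 - d")
      case True
      then have "g0 + d \<in> T" using qT by simp
      then have "f (g0 + d) \<notin> sd_units S" by (rule nu)
      then have "t \<noteq> 0" using ut True by auto
      then show ?thesis unfolding X_def using True by simp
    next
      case False
      have "\<not> (g0 + d \<in> T \<and> odd (dep T d (g0 + d)))"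
      proof
        assume "g0 + d \<in> T \<and> odd (dep T d (g0 + d))"
        moreover have "dep T d (g0 + d) = 0" using g0T by (intro dep_zero) simp
        ultimately show False by simp
      qed
      then show ?thesis unfolding X_def using False f1 by simp
    qed
    have Xc: "X c = f c" unfolding X_def using cq cT by simp
    have X1a: "X (g0 + d) = f (g0 + d)" if "g0 + d \<notin> T"
      unfolding X_def using that qT by auto
    have condX: "X (g0 + d) \<in> additive_atoms S \<or> (g0 + d \<in> T \<longleftrightarrow> True)"
      using cond X1a by auto
    have Xirr: "gs_irreducible S X"
    proof (rule Epiece[OF woT d g0T Tab XS X0 X1 _ _ condX])
      show "X c \<in> sd_units S" using Xc cu by simp
      show "x = g0 \<or> x = g0 + d \<or> x \<in> T \<and> even (dep T d x) = True" if "X x \<noteq> 0" for x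
        using that cov qT unfolding X_def by (auto split: if_splits)
    qed
    show ?thesis by (rule sum2[OF Xirr Yirr sumXY])
  qed
qed

end

context sdr begin

lemma Ccase:
  fixes f :: "'g::linordered_ab_group_add \<Rightarrow> 'a"
  assumes au: "additive_atoms S = sd_units S"
    and f: "f \<in> gseries S" and d: "0 < d"
    and TS: "T \<subseteq> gsupp f" and g0T: "g0 \<notin> T" and g1T: "g0 + d \<notin> T"
    and Tab: "\<And>x. x \<in> T \<Longrightarrow> g0 + d \<le> x"
    and cov: "\<And>x. f x \<noteq> 0 \<Longrightarrow> x = g0 \<or> x = g0 + d \<or> x \<in> T"
    and u0: "u0 \<in> sd_units S" "t0 \<in> S" "t0 \<noteq> 0" "f g0 = u0 + t0"
    and u1: "u1 \<in> sd_units S" "t1 \<in> S" "t1 \<noteq> 0" "f (g0 + d) = u1 + t1"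
  shows "sum_of_at_most_irreds S 3 f"
proof -
  have woT: "wo T" by (rule wo_sub[OF f TS])
  have g01: "g0 \<noteq> g0 + d" using d by simp
  have u0S: "u0 \<in> S" "u0 \<noteq> 0" using u0 unfolding sd_units_def by auto
  have u1S: "u1 \<in> S" "u1 \<noteq> 0" using u1 unfolding sd_units_def by auto
  define X where "X = (\<lambda>x. if x = g0 then t0 else if x = g0 + d then u1
      else if x \<in> T \<and> odd (dep T d x) then 0 else f x)"
  define Y where "Y = (\<lambda>x. if x = g0 then u0 else if x = g0 + d then t1
      else if x \<in> T \<and> odd (dep T d x) then f x else 0)"
  have sumXY: "f = (\<lambda>g. X g + Y g)" unfolding X_def Y_def using u0 u1 g01
    by (auto simp: fun_eq_iff algebra_simps)
  have fg: "f g0 \<noteq> 0" "f (g0 + d) \<noteq> 0"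
    using u0 u1 sumXY u0S u1S red_add by (metis add.commute)+
  have XS: "X \<in> gseries S"
  proof (rule gseries_sub[OF f])
    show "X x \<in> S" for x unfolding X_def using u0 u1 u1S gsS[OF f] zero_S by auto
    show "f x \<noteq> 0" if "X x \<noteq> 0" for x using that fg unfolding X_def by (auto split: if_splits)
  qed
  have YS: "Y \<in> gseries S"
  proof (rule gseries_sub[OF f])
    show "Y x \<in> S" for x unfolding Y_def using u0 u1 u0S gsS[OF f] zero_S by auto
    show "f x \<noteq> 0" if "Y x \<noteq> 0" for x using that fg unfolding Y_def by (auto split: if_splits)
  qed
  have Xirr: "gs_irreducible S X"
  proof (rule Epiece[OF woT d g0T Tab XS, of "g0 + d" True])
    show "X g0 \<noteq> 0" unfolding X_def using u0 by simp
    show "X (g0 + d) \<noteq> 0" unfolding X_def using g01 u1S by simp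
    show "X (g0 + d) \<in> sd_units S" unfolding X_def using g01 u1 by simp
    show "X (g0 + d) \<in> additive_atoms S \<or> (g0 + d \<in> T) = True"
      unfolding X_def using g01 u1 au by simp
    show "x = g0 \<or> x = g0 + d \<or> x \<in> T \<and> even (dep T d x) = True" if "X x \<noteq> 0" for x
      using that cov unfolding X_def by (auto split: if_splits)
  qed
  have Yirr: "gs_irreducible S Y"
  proof (rule Epiece[OF woT d g0T Tab YS, of g0 False])
    show "Y g0 \<noteq> 0" unfolding Y_def using u0S by simp
    show "Y (g0 + d) \<noteq> 0" unfolding Y_def using g01 u1 by simp
    show "Y g0 \<in> sd_units S" unfolding Y_def using u0 by simp
    show "Y (g0 + d) \<in> additive_atoms S \<or> (g0 + d \<in> T) = False"
      using g1T by simp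
    show "x = g0 \<or> x = g0 + d \<or> x \<in> T \<and> even (dep T d x) = False" if "Y x \<noteq> 0" for x
      using that unfolding Y_def by (auto split: if_splits)
  qed
  show ?thesis by (rule sum2[OF Xirr Yirr sumXY])
qed

lemma decomp:
  fixes f :: "'g::linordered_ab_group_add \<Rightarrow> 'a"
  assumes fur: "additively_Furstenberg S" and au: "additive_atoms S = sd_units S"
    and f: "f \<in> gseries S" and s2: "supp_gt1 f"
  shows "sum_of_at_most_irreds S 3 f"
proof -
  have spl: "\<exists>u t. u \<in> sd_units S \<and> t \<in> S \<and> c = u + t" if "c \<in> S" "c \<noteq> 0" for c
    using fur that au unfolding additively_Furstenberg_def by blast
  obtain x y where xy: "x \<noteq> y" "f x \<noteq> 0" "f y \<noteq> 0" using s2 unfolding supp_gt1_def gsupp_def by auto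
  obtain g0 where g0: "g0 \<in> gsupp f" "\<forall>z\<in>gsupp f. g0 \<le> z"
    using gs_wo[OF f, of "gsupp f"] xy unfolding gsupp_def by auto
  have "gsupp f - {g0} \<noteq> {}" using xy unfolding gsupp_def by auto
  then obtain g1 where g1: "g1 \<in> gsupp f - {g0}" "\<forall>z\<in>gsupp f - {g0}. g1 \<le> z"
    using gs_wo[OF f, of "gsupp f - {g0}"] by blast
  define d where "d = g1 - g0"
  have g1d: "g1 = g0 + d" unfolding d_def by simp
  have "g0 \<le> g1" using g0 g1 by auto
  then have d0: "0 < d" using g1 unfolding d_def by auto
  have f0: "f g0 \<noteq> 0" and f1: "f (g0 + d) \<noteq> 0" using g0 g1 g1d unfolding gsupp_def by auto
  have ge1: "g0 + d \<le> z" if "f z \<noteq> 0" "z \<noteq> g0" for z using g1 g1d that unfolding gsupp_def by auto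
  have g01: "g0 \<noteq> g0 + d" using d0 by simp
  show ?thesis
  proof (cases "f (g0 + d) \<in> sd_units S")
    case True
    let ?T = "gsupp f - {g0, g0 + d}"
    show ?thesis
    proof (rule ABcase[OF au spl f d0, of ?T g0 "g0 + d"])
      show "\<And>x. x \<in> ?T \<Longrightarrow> g0 + d \<le> x" using ge1 unfolding gsupp_def by auto
      show "\<And>x. f x \<noteq> 0 \<Longrightarrow> x = g0 \<or> x = g0 + d \<or> x \<in> ?T" unfolding gsupp_def by auto
      show "f (g0 + d) \<in> additive_atoms S \<or> g0 + d \<in> ?T" using True au by simp
    qed (use f0 f1 True in auto)
  next
    case nu1: False
    show ?thesis
    proof (cases "f g0 \<in> sd_units S")
      case True
      let ?T = "gsupp f - {g0}"
      show ?thesis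
      proof (rule ABcase[OF au spl f d0, of ?T g0 g0])
        show "\<And>x. x \<in> ?T \<Longrightarrow> g0 + d \<le> x" using ge1 unfolding gsupp_def by auto
        show "\<And>x. f x \<noteq> 0 \<Longrightarrow> x = g0 \<or> x = g0 + d \<or> x \<in> ?T" unfolding gsupp_def by auto
        show "f (g0 + d) \<in> additive_atoms S \<or> g0 + d \<in> ?T" using f1 g01 unfolding gsupp_def by auto
      qed (use f0 f1 True nu1 in auto)
    next
      case nu0: False
      obtain u0 t0 where ut0: "u0 \<in> sd_units S" "t0 \<in> S" "f g0 = u0 + t0"
        using spl[OF gsS[OF f] f0] by blast
      obtain u1 t1 where ut1: "u1 \<in> sd_units S" "t1 \<in> S" "f (g0 + d) = u1 + t1"
        using spl[OF gsS[OF f] f1] by blast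
      have "t0 \<noteq> 0" using ut0 nu0 by auto
      moreover have "t1 \<noteq> 0" using ut1 nu1 by auto
      ultimately show ?thesis
        using ut0 ut1 ge1
        by (intro Ccase[OF au f d0, of "gsupp f - {g0, g0 + d}" g0 u0 t0 u1 t1])
          (auto simp: gsupp_def)
    qed
  qed
qed

end

context sdr begin

lemma nonunit_atom:
  assumes fur: "additively_Furstenberg S" and ne: "additive_atoms S \<noteq> sd_units S"
  shows "\<exists>a\<in>additive_atoms S. a \<notin> sd_units S"
proof (rule ccontr)
  assume "\<not> ?thesis"
  then have sub: "additive_atoms S \<subseteq> sd_units S" by blast
  then obtain v where v: "v \<in> sd_units S" "v \<notin> additive_atoms S" using ne by blast
  then have vS: "v \<in> S" "v \<noteq> 0" unfolding sd_units_def by auto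
  then obtain b c where bc: "b \<in> S" "c \<in> S" "v = b + c" "b \<noteq> 0" "c \<noteq> 0"
    using v(2) unfolding additive_atoms_def by blast
  obtain w where w: "w \<in> S" "w \<noteq> 0" "v * w = 1" using v(1) unfolding sd_units_def by auto
  obtain a t where at: "a \<in> additive_atoms S" "t \<in> S" "1 = a + t"
    using fur one_S unfolding additively_Furstenberg_def by fastforce
  have aS: "a \<in> S" "a \<noteq> 0" using at unfolding additive_atoms_def by auto
  have "a * w * b + a * w * c = a * (v * w)" using bc by (simp add: algebra_simps)
  then have "a = a * w * b + a * w * c" using w(3) by simp
  moreover have "a * w * b \<in> S" "a * w * c \<in> S" using aS w bc by (auto intro: mult_S)
  moreover have "a * w * b \<noteq> 0" "a * w * c \<noteq> 0" using aS w bc by auto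
  ultimately show False using at(1) unfolding additive_atoms_def by blast
qed

lemma obstruction:
  fixes g :: "'g::linordered_ab_group_add"
  assumes a: "a \<in> additive_atoms S" "a \<notin> sd_units S" and g: "0 < g"
  shows "\<exists>f\<in>(gseries S :: ('g \<Rightarrow> 'a) set). supp_gt1 f \<and> \<not> sum_of_at_most_irreds S n f"
proof -
  have aS: "a \<in> S" "a \<noteq> 0" using a unfolding additive_atoms_def by auto
  define e where "e j = (((+) g) ^^ j) 0" for j
  have sm: "strict_mono e"
    unfolding strict_mono_Suc_iff e_def using g by simp
  define P where "P = e ` {..Suc n}"
  have finP: "finite P" unfolding P_def by simp
  have cardP: "card P = Suc (Suc n)"
    unfolding P_def using sm by (simp add: card_image strict_mono_imp_inj_on)
  define f where "f = (\<lambda>x. if x \<in> P then a else 0)"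
  have fS: "f \<in> gseries S"
    by (rule gseries_finite) (auto simp: f_def aS zero_S gsupp_def intro: finite_subset[OF _ finP])
  have "e 0 \<noteq> e 1" using sm by (metis strict_mono_eq zero_neq_one)
  moreover have "e 0 \<in> P" "e 1 \<in> P" unfolding P_def by auto
  ultimately have s2: "supp_gt1 f" unfolding supp_gt1_def gsupp_def f_def using aS by auto
  have "\<not> sum_of_at_most_irreds S n f"
  proof
    assume "sum_of_at_most_irreds S n f"
    then obtain k fs where k: "k \<le> n" "\<And>i. i < k \<Longrightarrow> gs_irreducible S (fs i)"
      and fsum: "f = (\<lambda>x. \<Sum>i<k. fs i x)"
      unfolding sum_of_at_most_irreds_def by blast
    have fsS: "fs i \<in> gseries S" if "i < k" for i using k(2)[OF that] unfolding gs_irreducible_def by auto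
    have fsv: "fs i x \<in> S" if "i < k" for i x using gsS[OF fsS[OF that]] .
    have sumx: "(\<Sum>i<k. fs i x) = f x" for x using fsum by metis
    have outP: "fs i x = 0" if "i < k" "x \<notin> P" for i x
      using sum_zero_all[of "{..<k}" "\<lambda>i. fs i x" i] that fsv sumx[of x] unfolding f_def by auto
    have uniq: "i = j" if "i < k" "j < k" "x \<in> P" "fs i x \<noteq> 0" "fs j x \<noteq> 0" for i j x
      using sum_atom_unique[of "{..<k}" "\<lambda>i. fs i x" i j] that fsv sumx[of x] a(1) unfolding f_def by auto
    have isa: "fs i x = a" if "i < k" "x \<in> P" "fs i x \<noteq> 0" for i x
    proof -
      have "(\<Sum>j<k. fs j x) = fs i x + (\<Sum>j\<in>{..<k} - {i}. fs j x)"
        using that by (simp add: sum.remove)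
      also have "(\<Sum>j\<in>{..<k} - {i}. fs j x) = 0"
        by (rule sum.neutral) (use uniq that in auto)
      finally show ?thesis using sumx[of x] that unfolding f_def by simp
    qed
    have ex: "\<exists>i<k. fs i x \<noteq> 0" if "x \<in> P" for x
    proof (rule ccontr)
      assume "\<not> ?thesis"
      then have "(\<Sum>i<k. fs i x) = 0" by simp
      then show False using sumx[of x] that aS unfolding f_def by simp
    qed
    have single: "x = y" if "i < k" "fs i x \<noteq> 0" "fs i y \<noteq> 0" for i x y
    proof (rule ccontr)
      assume xy: "x \<noteq> y"
      let ?h = "fs i"
      define p where "p = (\<lambda>z::'g. if z = 0 then a else 0)"
      define q where "q = (\<lambda>z::'g. if ?h z \<noteq> 0 then (1::'a) else 0)"
      have hP: "z \<in> P" if "?h z \<noteq> 0" for z using outP[OF \<open>i < k\<close>] that by blast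
      have pS: "p \<in> gseries S"
      proof (rule gseries_finite)
        show "p z \<in> S" for z by (simp add: p_def aS zero_S)
        have "gsupp p \<subseteq> {0}" unfolding gsupp_def p_def by auto
        then show "finite (gsupp p)" using finite_subset by blast
      qed
      have qS: "q \<in> gseries S"
      proof (rule gseries_finite)
        show "q z \<in> S" for z by (simp add: q_def one_S zero_S)
        have "gsupp q \<subseteq> P" unfolding gsupp_def q_def using hP by auto
        then show "finite (gsupp q)" using finP finite_subset by blast
      qed
      have hpq: "?h = gs_mult p q"
      proof
        fix z
        have "gs_mult p q z = p 0 * q (z - 0)" by (rule gs_mult_mono_left) (simp add: p_def)
        also have "\<dots> = ?h z"
        proof (cases "?h z = 0")
          case True then show ?thesis by (simp add: p_def q_def)
        next
          case False
          have "?h z = a" using isa[OF \<open>i < k\<close> hP[OF False] False] .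
          then show ?thesis using False by (simp add: p_def q_def)
        qed
        finally show "?h z = gs_mult p q z" by simp
      qed
      have irr: "\<forall>p\<in>gseries S. \<forall>q\<in>gseries S. ?h = gs_mult p q \<longrightarrow> gs_unit S p \<or> gs_unit S q"
        using k(2)[OF \<open>i < k\<close>] unfolding gs_irreducible_def by blast
      have "gs_unit S p \<or> gs_unit S q" using irr pS qS hpq by blast
      moreover have "\<not> gs_unit S q"
        using not_unit_two[OF qS, of x y] that xy by (simp add: q_def)
      moreover have "\<not> gs_unit S p"
      proof
        assume "gs_unit S p"
        then obtain v where v: "v \<in> gseries S" "gs_mult p v = gs_one" unfolding gs_unit_def by auto
        have "gs_mult p v 0 = p 0 * v (0 - 0)" by (rule gs_mult_mono_left) (simp add: p_def)
        moreover have "gs_mult p v 0 = 1" using v(2) by (simp add: gs_one_def)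
        ultimately have "a * v 0 = 1" by (simp add: p_def)
        then have "a \<in> sd_units S" using aS gsS[OF v(1)] unfolding sd_units_def by auto
        then show False using a(2) by simp
      qed
      ultimately show False by simp
    qed
    have "\<forall>x\<in>P. \<exists>i. i < k \<and> fs i x \<noteq> 0" using ex by blast
    then obtain own where own0: "\<forall>x\<in>P. own x < k \<and> fs (own x) x \<noteq> 0"
      by (auto dest!: bchoice)
    then have own: "\<And>x. x \<in> P \<Longrightarrow> own x < k \<and> fs (own x) x \<noteq> 0" by blast
    have "inj_on own P"
    proof (rule inj_onI)
      fix x y assume "x \<in> P" "y \<in> P" "own x = own y"
      then show "x = y" using own[of x] own[of y] single[of "own x" x y] by simp
    qed
    moreover have "own ` P \<subseteq> {..<k}" using own by auto
    ultimately have "card P \<le> card {..<k}" by (intro card_inj_on_le) auto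
    then show False using cardP k(1) by simp
  qed
  then show ?thesis using fS s2 by blast
qed

end

theorem corollary4p7:
  fixes S :: "'a::idom set"
  assumes "semidomain S"
    and "additively_reduced S"
    and "additively_Furstenberg S"
    and "finitely_generated_group TYPE('g::linordered_ab_group_add)"
    and "\<exists>g::'g. g \<noteq> 0"
  shows "(additive_atoms S = sd_units S \<longleftrightarrow>
           (\<forall>f\<in>(gseries S :: ('g \<Rightarrow> 'a) set). supp_gt1 f \<longrightarrow> sum_of_at_most_irreds S 3 f))
       \<and> ((\<forall>f\<in>(gseries S :: ('g \<Rightarrow> 'a) set). supp_gt1 f \<longrightarrow> sum_of_at_most_irreds S 3 f) \<longleftrightarrow>
           (\<exists>n::nat. n > 2 \<and>
              (\<forall>f\<in>(gseries S :: ('g \<Rightarrow> 'a) set). supp_gt1 f \<longrightarrow> sum_of_at_most_irreds S n f)))"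
proof -
  interpret sdr S using assms(1,2) by unfold_locales
  obtain g0 :: 'g where "g0 \<noteq> 0" using assms(5) by blast
  then obtain g :: 'g where g: "0 < g"
    by (metis neg_0_less_iff_less linorder_neqE)
  have A: "additive_atoms S = sd_units S" if
    H: "\<forall>f\<in>(gseries S :: ('g \<Rightarrow> 'a) set). supp_gt1 f \<longrightarrow> sum_of_at_most_irreds S n f" for n
  proof (rule ccontr)
    assume "additive_atoms S \<noteq> sd_units S"
    then obtain a where "a \<in> additive_atoms S" "a \<notin> sd_units S"
      using nonunit_atom[OF assms(3)] by blast
    then obtain f :: "'g \<Rightarrow> 'a" where "f \<in> gseries S" "supp_gt1 f" "\<not> sum_of_at_most_irreds S n f"
      using obstruction[OF _ _ g, of a n] by blast
    then show False using H by blast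
  qed
  have B: "\<forall>f\<in>(gseries S :: ('g \<Rightarrow> 'a) set). supp_gt1 f \<longrightarrow> sum_of_at_most_irreds S 3 f"
    if "additive_atoms S = sd_units S"
    using decomp[OF assms(3) that] by blast
  show ?thesis
  proof (intro conjI iffI)
    show "\<forall>f\<in>(gseries S :: ('g \<Rightarrow> 'a) set). supp_gt1 f \<longrightarrow> sum_of_at_most_irreds S 3 f"
      if "additive_atoms S = sd_units S" using B that by blast
    show "additive_atoms S = sd_units S"
      if "\<forall>f\<in>(gseries S :: ('g \<Rightarrow> 'a) set). supp_gt1 f \<longrightarrow> sum_of_at_most_irreds S 3 f"
      using A that by blast
    show "\<exists>n::nat. n > 2 \<and> (\<forall>f\<in>(gseries S :: ('g \<Rightarrow> 'a) set). supp_gt1 f \<longrightarrow> sum_of_at_most_irreds S n f)"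
      if "\<forall>f\<in>(gseries S :: ('g \<Rightarrow> 'a) set). supp_gt1 f \<longrightarrow> sum_of_at_most_irreds S 3 f"
      using that by (intro exI[of _ 3]) simp
    show "\<forall>f\<in>(gseries S :: ('g \<Rightarrow> 'a) set). supp_gt1 f \<longrightarrow> sum_of_at_most_irreds S 3 f"
      if "\<exists>n::nat. n > 2 \<and> (\<forall>f\<in>(gseries S :: ('g \<Rightarrow> 'a) set). supp_gt1 f \<longrightarrow> sum_of_at_most_irreds S n f)"
      using that A B by blast
  qed
qed


end
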